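(* Let $\omega_0=\min_{|z|=1}\operatorname{Re}\wp(z)$ ($\approx 0.136038$), $\gamma_0=\frac{2}{\pi}\sup_{z\in\mathbb{D}}|\arg\wp(z)|$ ($\approx 0.897828$), and $b=\max_{\theta\in[0,\pi]}T(\theta)$ ($\approx 1.58405$) where $T(\theta)=\dfrac{e^{2\cos\theta}\sin^2(\theta+\sin\theta)}{4(1+e^{\cos\theta}\cos(\theta+\sin\theta))}$. Then: (i) $\mathscr{S}^*_\wp\subset\mathcal{S}^*(\alpha)\subset\mathcal{S}^*$ for $0\le\alpha\le\omega_0$; (ii) $\mathscr{S}^*_\wp\subset\mathcal{M}(\beta)$ for $\beta\ge 1+e$, and $\mathscr{S}^*_\wp\subset\mathcal{S}^*(\omega_0)\cap\mathcal{M}(1+e)$; (iii) $\mathscr{S}^*_\wp\subset\mathcal{SS}^*(\gamma)\subset\mathcal{S}^*$ for $\gamma_0\le\gamma\le 1$; (iv) $\mathscr{S}^*_\wp\subset\mathcal{ST}_p(a)$ for $a\ge b$; (v) $k\text{-}\mathcal{ST}\subset\mathscr{S}^*_\wp$ for $k\ge e-1$.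
   Context: $\mathbb{D}$ is the unit disk; $\mathcal{A}$ is the class of analytic $f$ on $\mathbb{D}$ with $f(0)=0$, $f'(0)=1$. For analytic $f,g$, $f\prec g$ means $f=g\circ\omega$ for some analytic $\omega:\mathbb{D}\to\mathbb{D}$ with $\omega(0)=0$. $\wp(z)=1+ze^z$ and $\mathscr{S}^*_\wp=\{f\in\mathcal{A}: zf'(z)/f(z)\prec\wp(z)\}$. $\mathcal{S}^*(\alpha)=\{f\in\mathcal{A}:\operatorname{Re}(zf'/f)>\alpha\}$, $\mathcal{S}^*=\mathcal{S}^*(0)$; $\mathcal{M}(\beta)=\{f\in\mathcal{A}:\operatorname{Re}(zf'/f)<\beta\}$ ($\beta>1$); $\mathcal{SS}^*(\gamma)=\{f\in\mathcal{A}:|\arg(zf'/f)|<\gamma\pi/2\}$ ($0<\gamma\le1$); $k\text{-}\mathcal{ST}=\{f\in\mathcal{A}:\operatorname{Re}(zf'/f)>k|zf'/f-1|\}$ ($k\ge0$); $\mathcal{ST}_p(a)=\{f\in\mathcal{A}:\operatorname{Re}(zf'/f)+a>|zf'/f-a|\}$ ($a>0$). *)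

theory Defs
  imports "HOL-Analysis.Analysis"
begin

definition unit_disk :: "complex set" where
  "unit_disk = ball 0 1"

definition classA :: "(complex \<Rightarrow> complex) set" where
  "classA = {f. f holomorphic_on unit_disk \<and> f 0 = 0 \<and> deriv f 0 = 1}"

definition subordinate :: "(complex \<Rightarrow> complex) \<Rightarrow> (complex \<Rightarrow> complex) \<Rightarrow> bool" where
  "subordinate f g \<longleftrightarrow> (\<exists>w. w holomorphic_on unit_disk \<and> w ` unit_disk \<subseteq> unit_disk \<and> w 0 = 0
        \<and> (\<forall>z\<in>unit_disk. f z = g (w z)))"

definition sq :: "(complex \<Rightarrow> complex) \<Rightarrow> complex \<Rightarrow> complex" where
  "sq f z = (if z = 0 then 1 else z * deriv f z / f z)"

definition quot_defined :: "(complex \<Rightarrow> complex) \<Rightarrow> bool" where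
  "quot_defined f \<longleftrightarrow> (\<forall>z\<in>unit_disk. z \<noteq> 0 \<longrightarrow> f z \<noteq> 0)"

definition wp :: "complex \<Rightarrow> complex" where
  "wp z = 1 + z * exp z"

definition S_wp :: "(complex \<Rightarrow> complex) set" where
  "S_wp = {f \<in> classA. quot_defined f \<and> subordinate (sq f) wp}"

definition starlike_order :: "real \<Rightarrow> (complex \<Rightarrow> complex) set" where
  "starlike_order \<alpha> = {f \<in> classA. quot_defined f \<and> (\<forall>z\<in>unit_disk. Re (sq f z) > \<alpha>)}"

definition starlike :: "(complex \<Rightarrow> complex) set" where
  "starlike = starlike_order 0"

definition classM :: "real \<Rightarrow> (complex \<Rightarrow> complex) set" where
  "classM \<beta> = {f \<in> classA. quot_defined f \<and> (\<forall>z\<in>unit_disk. Re (sq f z) < \<beta>)}"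

definition strongly_starlike :: "real \<Rightarrow> (complex \<Rightarrow> complex) set" where
  "strongly_starlike \<gamma> = {f \<in> classA. quot_defined f \<and>
      (\<forall>z\<in>unit_disk. \<bar>Arg (sq f z)\<bar> < \<gamma> * pi / 2)}"

definition k_ST :: "real \<Rightarrow> (complex \<Rightarrow> complex) set" where
  "k_ST k = {f \<in> classA. quot_defined f \<and>
      (\<forall>z\<in>unit_disk. Re (sq f z) > k * cmod (sq f z - 1))}"

definition ST_p :: "real \<Rightarrow> (complex \<Rightarrow> complex) set" where
  "ST_p a = {f \<in> classA. quot_defined f \<and>
      (\<forall>z\<in>unit_disk. Re (sq f z) + a > cmod (sq f z - of_real a))}"

definition omega0 :: real where
  "omega0 = Inf ((\<lambda>z. Re (wp z)) ` sphere 0 1)"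

definition gamma0 :: real where
  "gamma0 = 2 / pi * (SUP z\<in>unit_disk. \<bar>Arg (wp z)\<bar>)"

definition Tfun :: "real \<Rightarrow> real" where
  "Tfun \<theta> = exp (2 * cos \<theta>) * (sin (\<theta> + sin \<theta>))\<^sup>2 /
              (4 * (1 + exp (cos \<theta>) * cos (\<theta> + sin \<theta>)))"

definition b_const :: real where
  "b_const = Sup (Tfun ` {0..pi})"

end

theory Submission
  imports Defs "HOL-Complex_Analysis.Complex_Analysis"
begin
lemma sin_up: fixes t::real assumes "0 \<le> t" shows "sin t \<le> t - t^3/6 + t^5/120 + t^7/5040"
proof -
  have 1: "\<bar>sin t - (\<Sum>m<7. sin_coeff m * t ^ m)\<bar> \<le> inverse (fact 7) * \<bar>t\<bar> ^ 7"
    by (rule Maclaurin_sin_bound)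
  have 2: "(\<Sum>m<7. sin_coeff m * t ^ m) = t - t^3/6 + t^5/120"
    by (simp add: lessThan_Suc eval_nat_numeral sin_coeff_Suc cos_coeff_Suc)
  have 3: "inverse (fact 7) * \<bar>t\<bar> ^ 7 = t^7/5040" 
  proof -
    have "(fact 7::real) = 5040" by (simp add: fact_numeral)
    thus ?thesis using assms by (simp add: field_simps)
  qed
  show ?thesis using 1 unfolding 2 3 by linarith
qed

lemma sin_low: fixes t::real assumes "0 \<le> t" shows "t - t^3/6 - t^5/120 \<le> sin t"
proof -
  have 1: "\<bar>sin t - (\<Sum>m<5. sin_coeff m * t ^ m)\<bar> \<le> inverse (fact 5) * \<bar>t\<bar> ^ 5"
    by (rule Maclaurin_sin_bound)
  have 2: "(\<Sum>m<5. sin_coeff m * t ^ m) = t - t^3/6"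
    by (simp add: lessThan_Suc eval_nat_numeral sin_coeff_Suc cos_coeff_Suc)
  have 3: "inverse (fact 5) * \<bar>t\<bar> ^ 5 = t^5/120"
  proof -
    have "(fact 5::real) = 120" by (simp add: fact_numeral)
    thus ?thesis using assms by (simp add: field_simps)
  qed
  show ?thesis using 1 unfolding 2 3 by linarith
qed

lemma cos_low: fixes y::real shows "1 - y^2/2 \<le> cos y"
proof -
  have "cos y = 1 - 2 * (sin (y/2))^2" using cos_double_sin[of "y/2"] by simp
  moreover have "(sin (y/2))^2 \<le> (y/2)^2"
    using abs_sin_x_le_abs_x[of "y/2"] by (metis abs_ge_zero power2_abs power_mono)
  ultimately show ?thesis by (simp add: power_divide)
qed

lemma ysin_abs: fixes y::real shows "y * sin y = \<bar>y\<bar> * sin \<bar>y\<bar>"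
  by (cases "y \<ge> 0") auto

lemma ysin_up: fixes y::real shows "y * sin y \<le> y^2 - y^4/6 + y^6/120 + y^8/5040"
proof -
  define t where "t = \<bar>y\<bar>"
  have t0: "0 \<le> t" unfolding t_def by simp
  have "t * sin t \<le> t * (t - t^3/6 + t^5/120 + t^7/5040)"
    by (rule mult_left_mono[OF sin_up[OF t0] t0])
  also have "t * (t - t^3/6 + t^5/120 + t^7/5040) = t^2 - t^4/6 + t^6/120 + t^8/5040"
    by (simp add: algebra_simps eval_nat_numeral)
  also have "\<dots> = y^2 - y^4/6 + y^6/120 + y^8/5040"
    unfolding t_def by (simp add: power_even_abs_numeral)
  finally show ?thesis by (simp add: ysin_abs[of y] t_def)
qed

lemma ysin_low: fixes y::real shows "y^2 - y^4/6 - y^6/120 \<le> y * sin y"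
proof -
  define t where "t = \<bar>y\<bar>"
  have t0: "0 \<le> t" unfolding t_def by simp
  have "t * (t - t^3/6 - t^5/120) \<le> t * sin t"
    by (rule mult_left_mono[OF sin_low[OF t0] t0])
  moreover have "t * (t - t^3/6 - t^5/120) = t^2 - t^4/6 - t^6/120"
    by (simp add: algebra_simps eval_nat_numeral)
  moreover have "t^2 - t^4/6 - t^6/120 = y^2 - y^4/6 - y^6/120"
    unfolding t_def by (simp add: power_even_abs_numeral)
  ultimately show ?thesis by (simp add: ysin_abs[of y] t_def)
qed

lemma ysin_le: fixes y::real shows "y * sin y \<le> y^2"
  using mult_left_mono[OF sin_x_le_x[of "\<bar>y\<bar>"], of "\<bar>y\<bar>"] ysin_abs[of y]
  by (simp add: power2_eq_square)

lemma ysin_less: fixes y::real assumes "y \<noteq> 0" "\<bar>y\<bar> \<le> 1" shows "y * sin y < y^2"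
proof -
  define s where "s = y^2"
  have a: "0 < s" "s \<le> 1" using assms unfolding s_def by (auto simp: abs_le_square_iff[of y 1, simplified])
  have ee: "y^4 = s * s" "y^6 = s * s * s" "y^8 = s * s * s * s" unfolding s_def by (simp_all add: eval_nat_numeral)
  have "y * sin y \<le> y^2 - y^4/6 + y^6/120 + y^8/5040" by (rule ysin_up)
  also have "\<dots> = s - s * s * (1/6 - s/120 - s * s/5040)" unfolding ee s_def by (simp add: algebra_simps)
  also have "\<dots> < s"
  proof -
    have "s * s \<le> 1" using mult_le_one[OF a(2) _ a(2)] a by simp
    hence "0 < 1/6 - s/120 - s * s/5040" using a by linarith
    moreover have "0 < s * s" using a by simp
    ultimately show ?thesis by simp
  qed
  finally show ?thesis unfolding s_def .
qed
lemma N0r: fixes x y :: real assumes xy: "x^2 + y^2 = 1" shows "exp x * (y * sin y - x * cos y) < 1"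
proof -
  have y1: "\<bar>y\<bar> \<le> 1" using xy abs_square_le_1[of y] by (smt (verit) zero_le_power2)
  have x1: "\<bar>x\<bar> \<le> 1" using xy abs_square_le_1[of x] by (smt (verit) zero_le_power2)
  show ?thesis
  proof (cases "x \<le> 0")
    case True
    define d where "d = -x"
    have d: "0 \<le> d" "d \<le> 1" using True x1 unfolding d_def by auto
    have ed: "exp x * (1 + d) \<le> 1"
    proof -
      have "1 + d \<le> exp d" by (rule exp_ge_add_one_self)
      hence "exp x * (1 + d) \<le> exp x * exp d" by simp
      also have "\<dots> = 1" unfolding d_def by (simp add: exp_minus[symmetric] exp_add[symmetric])
      finally show ?thesis .
    qed
    show ?thesis
    proof (cases "y = 0")
      case True
      hence "x^2 = 1" using xy by simp
      hence "x = -1" using \<open>x \<le> 0\<close> power2_eq_1_iff[of x] by auto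
      then show ?thesis using True by simp
    next
      case False
      have c: "- x * cos y \<le> d"
      proof -
        have "d * cos y \<le> d * 1" by (rule mult_left_mono[OF cos_le_one d(1)])
        thus ?thesis unfolding d_def by simp
      qed
      have "y * sin y - x * cos y < d + y^2"
        using ysin_less[OF False y1] c by linarith
      hence "exp x * (y * sin y - x * cos y) < exp x * (d + y^2)" by simp
      also have "\<dots> \<le> exp x * (1 + d)"
      proof -
        have "y^2 = 1 - d^2" using xy unfolding d_def by simp
        hence "d + y^2 \<le> 1 + d" using d by (simp add: power2_eq_square)
        thus ?thesis by simp
      qed
      finally have "exp x * (y * sin y - x * cos y) < exp x * (1 + d)" .
      thus ?thesis using ed by linarith
    qed
  next
    case False
    hence x: "0 < x" "x \<le> 1" using x1 by auto
    define t where "t = 1 - x^2"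
    have ty: "y^2 = t" using xy unfolding t_def by simp
    have ee: "y^4 = t * t" "y^6 = t * t * t" "y^8 = t * t * t * t" using ty by (simp_all add: eval_nat_numeral flip: ty)
    have S: "y * sin y \<le> t - t^2/6 + t^3/120 + t^4/5040"
      using ysin_up[of y] unfolding ee ty by (simp add: eval_nat_numeral)
    have C: "x * (1 - t/2) \<le> x * cos y" using cos_low[of y] x ty by (simp add: mult_left_mono)
    define B where "B = t - t^2/6 + t^3/120 + t^4/5040 - x + x*t/2"
    have bnd: "y * sin y - x * cos y \<le> B" using S C unfolding B_def by (simp add: algebra_simps)
    show ?thesis
    proof (cases "B \<le> 0")
      case True
      hence "y * sin y - x * cos y \<le> 0" using bnd by linarith
      hence "exp x * (y * sin y - x * cos y) \<le> 0" by (simp add: mult_nonneg_nonpos)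
      then show ?thesis by linarith
    next
      case False
      have "exp x * (y * sin y - x * cos y) \<le> exp x * B" using bnd by simp
      also have "\<dots> \<le> (1 + x + x^2) * B" using exp_bound[of x] x False by (simp add: mult_right_mono)
      also have "\<dots> < 1"
      proof -
        have BB: "5040 * B = 5040*t - 840*t^2 + 42*t^3 + t^4 - 5040*x + 2520*x*t" unfolding B_def by (simp add: algebra_simps)
        have id0: "5040 - (1 + x + x^2) * (5040*t - 840*t^2 + 42*t^3 + t^4 - 5040*x + 2520*x*t) = (797 - 1723*x + 1767*x^2) + x^3 * (8530 + 6718*x + 3228*x^2 + 754*x^3 + 46*x^4 + 45*x^5 - x^6 - x^7)"
          unfolding t_def by (simp add: algebra_simps eval_nat_numeral)
        have id: "5040 * (1 - (1 + x + x^2) * B) = (797 - 1723*x + 1767*x^2) + x^3 * (8530 + 6718*x + 3228*x^2 + 754*x^3 + 46*x^4 + 45*x^5 - x^6 - x^7)"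
        proof -
          have "5040 * (1 - (1 + x + x^2) * B) = 5040 - (1 + x + x^2) * (5040 * B)" by (simp add: algebra_simps)
          also have "\<dots> = 5040 - (1 + x + x^2) * (5040*t - 840*t^2 + 42*t^3 + t^4 - 5040*x + 2520*x*t)" unfolding BB ..
          finally show ?thesis unfolding id0 .
        qed
        have q: "0 < 797 - 1723*x + 1767*x^2"
        proof -
          have "0 \<le> 1767 * (x - 1723/3534)^2" by simp
          thus ?thesis by (simp add: power2_eq_square algebra_simps)
        qed
        have "x^6 \<le> 1" "x^7 \<le> 1" using x by (simp_all add: power_le_one)
        moreover have "0 \<le> x^3" "0 \<le> x^4" "0 \<le> x^5" "0 \<le> x^2" using x by simp_all
        ultimately have "0 \<le> 8530 + 6718*x + 3228*x^2 + 754*x^3 + 46*x^4 + 45*x^5 - x^6 - x^7" using x by linarith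
        hence "0 \<le> x^3 * (8530 + 6718*x + 3228*x^2 + 754*x^3 + 46*x^4 + 45*x^5 - x^6 - x^7)" using x by simp
        with q id have "0 < 5040 * (1 - (1 + x + x^2) * B)" by linarith
        thus ?thesis by simp
      qed
      finally show ?thesis .
    qed
  qed
qed
lemma e_bounds: "2.7 < exp (1::real)" "exp (1::real) < 2.72"
  using e_approx_32 by (simp_all add: abs_if split: if_splits)

lemma exp_chord: fixes s::real assumes "-1 \<le> s" "s \<le> 1"
  shows "exp s \<le> (1-s)/2 * exp(-1) + (1+s)/2 * exp 1"
proof -
  have "exp ((1 - (1+s)/2) *\<^sub>R (-1) + ((1+s)/2) *\<^sub>R 1) \<le> (1 - (1+s)/2) * exp (-1) + ((1+s)/2) * exp 1"
    by (rule convex_onD[OF exp_convex]) (use assms in auto)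
  moreover have "(1 - (1+s)/2) *\<^sub>R (-1) + ((1+s)/2) *\<^sub>R 1 = s" by (simp add: divide_simps)
  moreover have "1 - (1+s)/2 = (1-s)/2" by (simp add: divide_simps)
  ultimately show ?thesis by simp
qed

lemma exp_chord01: fixes u::real assumes "0 \<le> u" "u \<le> 1"
  shows "exp u \<le> 1 + (exp 1 - 1) * u"
proof -
  have "exp ((1 - u) *\<^sub>R 0 + u *\<^sub>R 1) \<le> (1 - u) * exp 0 + u * exp 1"
    by (rule convex_onD[OF exp_convex]) (use assms in auto)
  thus ?thesis by (simp add: algebra_simps)
qed

lemma N1r: fixes x y :: real assumes xy: "x^2 + y^2 = 1"
  shows "exp (-x) + (x * cos y - y * sin y) \<le> exp 1 - 1"
proof -
  have y1: "y^2 \<le> 1" using xy by (smt (verit) zero_le_power2)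
  have x1: "\<bar>x\<bar> \<le> 1" using xy abs_square_le_1[of x] by (smt (verit) zero_le_power2)
  have T1: "exp (-x) \<le> exp 1 - 1 - x"
  proof -
    have "exp (-x) \<le> (1+x)/2 * exp(-1) + (1-x)/2 * exp 1" using exp_chord[of "-x"] x1 by simp
    also have "\<dots> \<le> exp 1 - 1 - x"
    proof -
      have e: "2.7 < exp (1::real)" by (rule e_bounds)
      have "exp (-1::real) = 1 / exp 1" by (simp add: exp_minus field_simps)
      moreover have "1 / exp 1 \<le> exp (1::real) - 2"
      proof -
        have "(27/10) * (7/10) \<le> exp 1 * (exp (1::real) - 2)" using e by (intro mult_mono) auto
        hence "1 \<le> exp 1 * (exp (1::real) - 2)" by simp
        thus ?thesis using e by (simp add: field_simps)
      qed
      ultimately have em: "exp (-1::real) \<le> exp 1 - 2" by simp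
      have "(1+x)/2 * exp(-1) \<le> (1+x)/2 * (exp 1 - 2)" using em x1 by (intro mult_left_mono) auto
      thus ?thesis by (simp add: field_simps)
    qed
    finally show ?thesis .
  qed
  have T2: "(1 + x) * cos y \<le> 1 + x" using mult_left_mono[OF cos_le_one[of y], of "1+x"] x1 by simp
  have T3: "1 - cos y \<le> y * sin y"
  proof -
    have "1 - cos y \<le> y^2/2" using cos_low[of y] by simp
    also have "\<dots> \<le> y^2 - y^4/6 - y^6/120"
    proof -
      define s where "s = y^2"
      have s: "0 \<le> s" "s \<le> 1" using y1 unfolding s_def by auto
      have ee: "y^4 = s * s" "y^6 = s * s * s" unfolding s_def by (simp_all add: eval_nat_numeral)
      have "s * s \<le> 1" "s * s * s \<le> 1" using s by (simp_all add: mult_le_one)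
      moreover have "s * s \<le> s" using s by (simp add: mult_left_le)
      moreover have "s * s * s \<le> s * s" using mult_left_mono[of s 1 "s * s"] s by simp
      ultimately show ?thesis unfolding ee s_def[symmetric] using s by linarith
    qed
    also have "\<dots> \<le> y * sin y" by (rule ysin_low)
    finally show ?thesis .
  qed
  have "x * cos y = (1 + x) * cos y - cos y" by (simp add: algebra_simps)
  thus ?thesis using T1 T2 T3 by linarith
qed

lemma N2r: fixes x y :: real assumes xy: "x^2 + y^2 \<le> 1"
  shows "exp (-x) - cos y \<le> (exp 1 - 1) * sqrt (x^2 + y^2)"
proof -
  have y1: "y^2 \<le> 1" using xy zero_le_power2[of x] by linarith
  have "x^2 \<le> 1" using xy zero_le_power2[of y] by linarith
  hence x1: "\<bar>x\<bar> \<le> 1" using abs_square_le_1[of x] by simp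
  have ay: "\<bar>y\<bar> \<le> 1" using y1 abs_square_le_1 by blast
  have e: "2.7 < exp (1::real)" by (rule e_bounds)
  have cy: "1 - cos y \<le> y^2/2" using cos_low[of y] by simp
  have sq: "\<bar>y\<bar> \<le> sqrt (x^2 + y^2)"
  proof -
    have "sqrt (y^2) \<le> sqrt (x^2 + y^2)" by (rule real_sqrt_le_mono) simp
    thus ?thesis by simp
  qed
  show ?thesis
  proof (cases "x \<le> 0")
    case False
    have "exp (-x) \<le> 1" using False by simp
    hence "exp (-x) - cos y \<le> y^2/2" using cy by linarith
    also have "\<dots> \<le> \<bar>y\<bar>"
    proof -
      have "\<bar>y\<bar> * \<bar>y\<bar> \<le> \<bar>y\<bar> * 1" by (rule mult_left_mono[OF ay]) simp
      hence "y^2 \<le> \<bar>y\<bar>" by (simp add: power2_eq_square)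
      thus ?thesis by simp
    qed
    also have "\<dots> \<le> (exp 1 - 1) * \<bar>y\<bar>" using e by (simp add: mult_le_cancel_right1)
    also have "\<dots> \<le> (exp 1 - 1) * sqrt (x^2 + y^2)" using e sq by (simp add: mult_left_mono)
    finally show ?thesis .
  next
    case True
    define u where "u = -x"
    have u: "0 \<le> u" "u \<le> 1" using True x1 unfolding u_def by auto
    have "exp (-x) \<le> 1 + (exp 1 - 1) * u" unfolding u_def using exp_chord01[of "-x"] u unfolding u_def by simp
    hence "exp (-x) - cos y \<le> (exp 1 - 1) * u + y^2/2" using cy by linarith
    also have "\<dots> \<le> (exp 1 - 1) * (u + y^2/2)"
    proof -
      have "y^2/2 \<le> (exp 1 - 1) * (y^2/2)" using e by (simp add: mult_le_cancel_right1)
      thus ?thesis by (simp add: algebra_simps)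
    qed
    also have "\<dots> \<le> (exp 1 - 1) * sqrt (x^2 + y^2)"
    proof -
      have "(u + y^2/2)^2 \<le> x^2 + y^2"
      proof -
        have "u^2 \<le> 1 - y^2" using xy unfolding u_def by simp
        have "u \<le> 1 - y^2/2"
        proof (rule ccontr)
          assume "\<not> u \<le> 1 - y^2/2"
          hence "(1 - y^2/2)^2 < u^2" using y1 by (intro power_strict_mono) auto
          moreover have "(1 - y^2/2)^2 = 1 - y^2 + y^2 * y^2/4" by (simp add: power2_eq_square algebra_simps)
          moreover have "0 \<le> y^2 * y^2" by simp
          ultimately show False using \<open>u^2 \<le> 1 - y^2\<close> by linarith
        qed
        hence "u + y^2/4 \<le> 1" using zero_le_power2[of y] by linarith
        hence "(u + y^2/4) * y^2 \<le> 1 * y^2" by (rule mult_right_mono) simp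
        hence "u * y^2 + y^2 * y^2/4 \<le> y^2" by (simp add: algebra_simps)
        thus ?thesis unfolding u_def by (simp add: power2_eq_square algebra_simps)
      qed
      hence "u + y^2/2 \<le> sqrt (x^2 + y^2)" using u by (simp add: real_le_rsqrt)
      thus ?thesis using e by (simp add: mult_left_mono)
    qed
    finally show ?thesis .
  qed
qed

lemma wp_eq: "wp = (\<lambda>z. 1 + z * exp z)" by (rule ext) (simp add: wp_def)

lemma wp_holo[holomorphic_intros]: "wp holomorphic_on S"
  unfolding wp_eq by (intro holomorphic_intros)

lemma wp_cont: "continuous_on S wp"
  by (rule holomorphic_on_imp_continuous_on[OF wp_holo])

lemma Re_wp: "Re (wp z) = 1 + exp (Re z) * (Re z * cos (Im z) - Im z * sin (Im z))"
  by (simp add: wp_def Re_exp Im_exp algebra_simps)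

lemma Im_wp: "Im (wp z) = exp (Re z) * (Re z * sin (Im z) + Im z * cos (Im z))"
  by (simp add: wp_def Re_exp Im_exp algebra_simps)

lemma norm_wp1: "cmod (wp z - 1) = cmod z * exp (Re z)"
  by (simp add: wp_def norm_mult)

lemma Re_dh: "Re ((1 + z) * exp z) = exp (Re z) * ((1 + Re z) * cos (Im z) - Im z * sin (Im z))"
  by (simp add: Re_exp Im_exp algebra_simps)

lemma cmod_sq: "(Re z)^2 + (Im z)^2 = (cmod z)^2"
  by (simp add: cmod_power2)

lemma C0: assumes "cmod z = 1" shows "0 < Re (wp z)"
proof -
  have "(Re z)^2 + (Im z)^2 = 1" using assms cmod_sq[of z] by simp
  from N0r[OF this] show ?thesis unfolding Re_wp by (simp add: algebra_simps)
qed

lemma C1: assumes "cmod z = 1" shows "Re (wp z) \<le> (exp 1 - 1) * cmod (wp z - 1)"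
proof -
  have "(Re z)^2 + (Im z)^2 = 1" using assms cmod_sq[of z] by simp
  from N1r[OF this] have "exp (Re z) * (exp (- Re z) + (Re z * cos (Im z) - Im z * sin (Im z))) \<le> exp (Re z) * (exp 1 - 1)"
    by (intro mult_left_mono) auto
  hence "1 + exp (Re z) * (Re z * cos (Im z) - Im z * sin (Im z)) \<le> exp (Re z) * (exp 1 - 1)"
    by (simp add: algebra_simps exp_minus)
  thus ?thesis unfolding Re_wp norm_wp1 assms by (simp add: algebra_simps)
qed

lemma C2: assumes "cmod z \<le> 1" "Re ((1 + z) * exp z) = 0"
  shows "Re (wp z) \<le> (exp 1 - 1) * cmod (wp z - 1)"
proof -
  have xy: "(Re z)^2 + (Im z)^2 \<le> 1" using assms cmod_sq[of z]
    by (metis abs_square_le_1 norm_ge_zero abs_of_nonneg)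
  have sq: "sqrt ((Re z)^2 + (Im z)^2) = cmod z" by (simp add: cmod_def)
  have c: "(1 + Re z) * cos (Im z) = Im z * sin (Im z)" using assms(2) unfolding Re_dh by simp
  from N2r[OF xy] have "exp (Re z) * (exp (- Re z) - cos (Im z)) \<le> exp (Re z) * ((exp 1 - 1) * cmod z)"
    unfolding sq by (intro mult_left_mono) auto
  hence "1 - exp (Re z) * cos (Im z) \<le> exp (Re z) * ((exp 1 - 1) * cmod z)"
    by (simp add: algebra_simps exp_minus)
  moreover have "Re z * cos (Im z) - Im z * sin (Im z) = - cos (Im z)" using c by (simp add: algebra_simps)
  ultimately have "Re (wp z) \<le> exp (Re z) * ((exp 1 - 1) * cmod z)" unfolding Re_wp by simp
  thus ?thesis unfolding norm_wp1 by (simp add: algebra_simps)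
qed

lemma wp_nonconst: assumes "c \<noteq> 0" shows "\<not> (\<lambda>z. c * wp z + d) constant_on ball 0 1"
proof
  assume "(\<lambda>z. c * wp z + d) constant_on ball 0 1"
  then obtain k where k: "\<And>z. z \<in> ball 0 1 \<Longrightarrow> c * wp z + d = k" unfolding constant_on_def by blast
  have "c * wp 0 + d = c * wp (1/2) + d" using k[of 0] k[of "1/2"] by simp
  hence "wp 0 = wp (1/2)" using assms by simp
  moreover have "exp (1/2::complex) \<noteq> 0" by simp
  ultimately show False by (simp add: wp_def)
qed

lemma min_principle:
  assumes hol: "g holomorphic_on UNIV" and nc: "\<not> g constant_on ball 0 1"
    and bd: "\<And>z. cmod z = 1 \<Longrightarrow> 0 \<le> Re (g z)" and z: "z \<in> ball 0 1"
  shows "0 < Re (g z)"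
proof -
  have ge: "0 \<le> Re (g w)" if "w \<in> cball 0 1" for w
  proof -
    have "norm (exp (- g w)) \<le> 1"
    proof (rule maximum_modulus_frontier[where S="cball 0 1" and f="\<lambda>w. exp (- g w)"])
      show "(\<lambda>w. exp (- g w)) holomorphic_on interior (cball 0 1)"
        using hol by (intro holomorphic_intros) (auto intro: holomorphic_on_subset)
      show "continuous_on (closure (cball 0 1)) (\<lambda>w. exp (- g w))"
        using holomorphic_on_imp_continuous_on[OF hol] by (intro continuous_intros) (auto intro: continuous_on_subset)
      show "bounded (cball (0::complex) 1)" by simp
      show "norm (exp (- g u)) \<le> 1" if "u \<in> frontier (cball 0 1)" for u
        using bd[of u] that by (simp add: frontier_cball)
      show "w \<in> cball 0 1" by fact
    qed
    thus ?thesis by simp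
  qed
  have op: "open (g ` ball 0 1)"
    by (rule open_mapping_thm[OF holomorphic_on_subset[OF hol] _ _ _ _ nc]) auto
  show ?thesis
  proof (rule ccontr)
    assume "\<not> 0 < Re (g z)"
    hence r0: "Re (g z) = 0" using ge[of z] z by auto
    have gz: "g z \<in> g ` ball 0 1" using z by (rule imageI)
    obtain r where r: "r > 0" "ball (g z) r \<subseteq> g ` ball 0 1"
      using openE[OF op gz] by blast
    have "g z - of_real (r/2) \<in> ball (g z) r" using r by (simp add: dist_norm)
    hence "g z - of_real (r/2) \<in> g ` ball 0 1" using r by blast
    then obtain w where w: "w \<in> ball 0 1" "g z - of_real (r/2) = g w" by (rule imageE)
    have "0 \<le> Re (g w)" using ge[of w] w by auto
    moreover have "Re (g w) = - r/2" using w(2)[symmetric] r0 by simp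
    ultimately show False using r by simp
  qed
qed

lemma omega0_ge: "0 \<le> omega0"
  unfolding omega0_def
proof (rule cInf_greatest)
  show "(\<lambda>z. Re (wp z)) ` sphere 0 1 \<noteq> {}" by (auto intro!: exI[of _ 1])
  show "\<And>x. x \<in> (\<lambda>z. Re (wp z)) ` sphere 0 1 \<Longrightarrow> 0 \<le> x" using C0 by fastforce
qed

lemma omega0_lower: assumes "cmod z = 1" shows "omega0 \<le> Re (wp z)"
  unfolding omega0_def
proof (rule cInf_lower)
  show "Re (wp z) \<in> (\<lambda>z. Re (wp z)) ` sphere 0 1" using assms by auto
  show "bdd_below ((\<lambda>z. Re (wp z)) ` sphere 0 1)"
    by (rule bdd_belowI[of _ 0]) (use C0 in fastforce)
qed

lemma wp_gt_omega0: assumes "z \<in> ball 0 1" shows "omega0 < Re (wp z)"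
proof -
  have "0 < Re ((\<lambda>z. 1 * wp z + (- of_real omega0)) z)"
  proof (rule min_principle[OF _ wp_nonconst _ assms])
    show "(\<lambda>z. 1 * wp z + - complex_of_real omega0) holomorphic_on UNIV" by (intro holomorphic_intros)
    show "\<And>z. cmod z = 1 \<Longrightarrow> 0 \<le> Re (1 * wp z + - complex_of_real omega0)" using omega0_lower by simp
  qed simp
  thus ?thesis by simp
qed

lemma wp_Re_pos: assumes "z \<in> ball 0 1" shows "0 < Re (wp z)"
  using wp_gt_omega0[OF assms] omega0_ge by linarith

lemma wp_lt: assumes "z \<in> ball 0 1" shows "Re (wp z) < 1 + exp 1"
proof -
  have "Re (wp z) = 1 + Re (wp z - 1)" by simp
  also have "Re (wp z - 1) \<le> cmod (wp z - 1)" by (rule complex_Re_le_cmod)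
  also have "cmod (wp z - 1) = cmod z * exp (Re z)" by (rule norm_wp1)
  also have "\<dots> < 1 * exp 1"
  proof (rule mult_less_le_imp_less)
    show "cmod z < 1" using assms by simp
    have "Re z \<le> cmod z" by (rule complex_Re_le_cmod)
    thus "exp (Re z) \<le> exp 1" using assms by simp
  qed auto
  finally show ?thesis by simp
qed

lemma wp_open: "open (wp ` ball 0 1)"
proof (rule open_mapping_thm[OF wp_holo])
  show "\<not> wp constant_on ball 0 1" using wp_nonconst[of 1 0] by simp
qed auto

lemma norm_expi_minus1: "cmod (exp (\<i> * of_real t) - 1) \<le> \<bar>t\<bar>"
proof -
  have "(cmod (exp (\<i> * of_real t) - 1))^2 = (cos t - 1)^2 + (sin t)^2"
    by (simp add: cmod_power2 Re_exp Im_exp)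
  also have "\<dots> = 2 - 2 * cos t" by (simp add: power2_eq_square algebra_simps sin_squared_eq)
  also have "\<dots> \<le> t^2" using cos_low[of t] by simp
  finally have "(cmod (exp (\<i> * of_real t) - 1))^2 \<le> \<bar>t\<bar>^2" by simp
  thus ?thesis by (rule power2_le_imp_le) simp
qed

lemma arg_strict:
  assumes "z \<in> ball 0 1"
  shows "\<bar>Arg (wp z)\<bar> < (SUP z\<in>ball 0 1. \<bar>Arg (wp z)\<bar>)"
proof -
  define G where "G = (SUP z\<in>ball 0 1. \<bar>Arg (wp z)\<bar>)"
  have bdd: "bdd_above ((\<lambda>z. \<bar>Arg (wp z)\<bar>) ` ball 0 1)"
  proof (rule bdd_aboveI2)
    fix u
    have "-pi < Arg (wp u)" "Arg (wp u) \<le> pi" by (rule mpi_less_Arg, rule Arg_le_pi)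
    thus "\<bar>Arg (wp u)\<bar> \<le> pi" by linarith
  qed
  have up: "\<bar>Arg (wp u)\<bar> \<le> G" if "u \<in> ball 0 1" for u
    unfolding G_def by (rule cSUP_upper[OF that bdd])
  show ?thesis unfolding G_def[symmetric]
  proof (rule ccontr)
    assume "\<not> \<bar>Arg (wp z)\<bar> < G"
    hence eq: "\<bar>Arg (wp z)\<bar> = G" using up[OF assms] by simp
    define w0 where "w0 = wp z"
    have re: "0 < Re w0" unfolding w0_def by (rule wp_Re_pos[OF assms])
    hence w0: "w0 \<noteq> 0" by auto
    have a2: "\<bar>Arg w0\<bar> < pi/2" using re Arg_Re_pos by blast
    have n0: "0 < cmod w0" using w0 by simp
    have "w0 \<in> wp ` ball 0 1" using assms unfolding w0_def by simp
    then obtain r where r: "r > 0" "ball w0 r \<subseteq> wp ` ball 0 1" using openE[OF wp_open] by blast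
    define s where "s = (if 0 \<le> Arg w0 then 1 else -1::real)"
    define e where "e = min (pi/4) (r / (2 * cmod w0))"
    have e: "0 < e" "e \<le> pi/4" "e \<le> r / (2 * cmod w0)" unfolding e_def using r n0 by auto
    define w1 where "w1 = of_real (cmod w0) * exp (\<i> * of_real (Arg w0 + s * e))"
    have "Arg w1 = Arg w0 + s * e"
      by (rule Arg_unique[OF w1_def[symmetric] n0]) (use a2 e in \<open>auto simp: s_def\<close>)
    hence aw1: "\<bar>Arg w1\<bar> = \<bar>Arg w0\<bar> + e" using e unfolding s_def by auto
    have "w1 - w0 = of_real (cmod w0) * exp (\<i> * of_real (Arg w0)) * (exp (\<i> * of_real (s * e)) - 1)"
    proof -
      have "w0 = of_real (cmod w0) * exp (\<i> * of_real (Arg w0))" using Arg_eq[OF w0] by simp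
      moreover have "exp (\<i> * of_real (Arg w0 + s * e)) = exp (\<i> * of_real (Arg w0)) * exp (\<i> * of_real (s * e))"
        by (simp add: distrib_left exp_add)
      ultimately show ?thesis unfolding w1_def by (simp add: algebra_simps)
    qed
    hence "cmod (w1 - w0) = cmod w0 * cmod (exp (\<i> * of_real (s * e)) - 1)"
      by (simp add: norm_mult)
    also have "\<dots> \<le> cmod w0 * \<bar>s * e\<bar>" by (rule mult_left_mono[OF norm_expi_minus1]) simp
    also have "\<dots> = cmod w0 * e" using e by (simp add: s_def abs_mult)
    also have "\<dots> \<le> cmod w0 * (r / (2 * cmod w0))" by (rule mult_left_mono[OF e(3)]) simp
    also have "\<dots> < r" using n0 r by (simp add: field_simps)
    finally have "w1 \<in> ball w0 r" by (simp add: dist_norm norm_minus_commute)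
    then obtain u where u: "u \<in> ball 0 1" "w1 = wp u" using r by blast
    have "\<bar>Arg w1\<bar> \<le> G" using up[OF u(1)] u(2) by simp
    thus False using aw1 eq e unfolding w0_def by simp
  qed
qed

lemma wp_cis_Re: "Re (wp (exp (\<i> * of_real t))) = 1 + exp (cos t) * cos (t + sin t)"
  by (simp add: Re_wp Re_exp Im_exp cos_add)

lemma wp_cis_Im: "Im (wp (exp (\<i> * of_real t))) = exp (cos t) * sin (t + sin t)"
  by (simp add: Im_wp Re_exp Im_exp sin_add algebra_simps)

lemma norm_cis1: "cmod (exp (\<i> * of_real t)) = 1" by simp

lemma Tfun_eq: "Tfun t = (Im (wp (exp (\<i> * of_real t))))^2 / (4 * Re (wp (exp (\<i> * of_real t))))"
proof -
  have "exp (2 * cos t) = (exp (cos t))^2" by (simp add: exp_double[symmetric] mult.commute)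
  thus ?thesis unfolding Tfun_def wp_cis_Re wp_cis_Im by (simp add: power_mult_distrib)
qed

lemma Tfun_even: "Tfun (-t) = Tfun t"
proof -
  have e: "- t + sin (- t) = - (t + sin t)" by simp
  have "sin (- t + sin (- t)) = - sin (t + sin t)" unfolding e by (rule sin_minus)
  moreover have "cos (- t + sin (- t)) = cos (t + sin t)" unfolding e by (rule cos_minus)
  ultimately show ?thesis unfolding Tfun_def by simp
qed

lemma Tfun_cont: "continuous_on S Tfun"
proof -
  have cw: "continuous_on S (\<lambda>t. wp (exp (\<i> * of_real t)))"
    by (rule continuous_on_compose2[OF wp_cont[of UNIV]]) (auto intro!: continuous_intros)
  have "continuous_on S (\<lambda>t. (Im (wp (exp (\<i> * of_real t))))^2 / (4 * Re (wp (exp (\<i> * of_real t)))))"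
  proof (rule continuous_on_divide)
    show "continuous_on S (\<lambda>t. (Im (wp (exp (\<i> * of_real t))))^2)"
      by (intro continuous_on_power continuous_on_Im cw)
    show "continuous_on S (\<lambda>t. 4 * Re (wp (exp (\<i> * of_real t))))"
      by (intro continuous_on_mult continuous_on_const continuous_on_Re cw)
    show "\<forall>x\<in>S. 4 * Re (wp (exp (\<i> * complex_of_real x))) \<noteq> 0"
      using C0[OF norm_cis1] by (metis mult_eq_0_iff order_less_irrefl zero_neq_numeral)
  qed
  thus ?thesis unfolding Tfun_eq[abs_def] by simp
qed

lemma Tfun_bdd: "bdd_above (Tfun ` {0..pi})"
  by (rule bounded_imp_bdd_above[OF compact_imp_bounded[OF compact_continuous_image[OF Tfun_cont]]]) simp

lemma Tfun_le_b: "t \<in> {0..pi} \<Longrightarrow> Tfun t \<le> b_const"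
  unfolding b_const_def by (rule cSup_upper[OF _ Tfun_bdd]) simp

lemma b_pos: "0 < b_const"
proof -
  have "pi/2 \<in> {0..pi}" using pi_gt_zero by simp
  hence "Tfun (pi/2) \<le> b_const" by (rule Tfun_le_b)
  moreover have "0 < Tfun (pi/2)"
  proof -
    have "0 < cos (1::real)" using pi_gt3 by (intro cos_gt_zero) auto
    hence "0 < Im (wp (exp (\<i> * of_real (pi/2))))" unfolding wp_cis_Im by (simp add: sin_add)
    moreover have "0 < Re (wp (exp (\<i> * of_real (pi/2))))" by (rule C0[OF norm_cis1])
    ultimately show ?thesis unfolding Tfun_eq by simp
  qed
  ultimately show ?thesis by linarith
qed

lemma sphere_STp: assumes "cmod z = 1" "b_const \<le> a"
  shows "cmod (wp z - of_real a) \<le> Re (wp z) + a"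
proof -
  have z0: "z \<noteq> 0" using assms by auto
  define t where "t = Arg z"
  have zt: "z = exp (\<i> * of_real t)" using Arg_eq[OF z0] assms unfolding t_def by simp
  have "\<bar>t\<bar> \<in> {0..pi}" unfolding t_def using mpi_less_Arg[of z] Arg_le_pi[of z] by auto
  hence "Tfun \<bar>t\<bar> \<le> b_const" by (rule Tfun_le_b)
  moreover have "Tfun \<bar>t\<bar> = Tfun t" by (cases "t \<ge> 0") (auto simp: Tfun_even)
  ultimately have T: "Tfun t \<le> a" using assms by simp
  define u where "u = Re (wp z)"
  define v where "v = Im (wp z)"
  have u: "0 < u" unfolding u_def by (rule C0[OF assms(1)])
  have "v^2 / (4 * u) \<le> a" using T unfolding Tfun_eq u_def v_def zt .
  hence v2: "v^2 \<le> 4 * a * u" using u by (simp add: field_simps)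
  have a0: "0 < a" using b_pos assms by linarith
  have "(cmod (wp z - of_real a))^2 = (u - a)^2 + v^2" unfolding u_def v_def by (simp add: cmod_power2)
  also have "\<dots> \<le> (u + a)^2" using v2 by (simp add: power2_eq_square algebra_simps)
  finally have "(cmod (wp z - of_real a))^2 \<le> (u + a)^2" .
  hence "cmod (wp z - of_real a) \<le> u + a" by (rule power2_le_imp_le) (use u a0 in simp)
  thus ?thesis unfolding u_def .
qed

lemma STp_ball: assumes "z \<in> ball 0 1" "b_const \<le> a"
  shows "cmod (wp z - of_real a) < Re (wp z) + a"
proof -
  have a0: "0 < a" using b_pos assms by linarith
  define w where "w = wp z"
  have re: "0 < Re w" unfolding w_def by (rule wp_Re_pos[OF assms(1)])
  have "cmod (w - of_real a) < Re w + a"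
  proof (cases "w = of_real a")
    case True
    then show ?thesis using a0 by simp
  next
    case False
    define n where "n = cmod (w - of_real a)"
    have n: "0 < n" using False unfolding n_def by simp
    define c where "c = (w - of_real a) / of_real n"
    have c1: "cmod c = 1" unfolding c_def using n unfolding n_def by (simp add: norm_divide)
    have wc: "w - of_real a = of_real n * c" unfolding c_def using n by simp
    have cc: "cnj c * c = 1"
    proof -
      have "cnj c * c = (of_real (cmod c))^2" using complex_norm_square[of c] by (simp add: mult.commute)
      thus ?thesis using c1 by simp
    qed
    show ?thesis
    proof (cases "c = 1")
      case True
      hence "w - of_real a = of_real n" using wc by simp
      hence "Re (w - of_real a) = n" by simp
      hence "Re w - a = n" by simp
      thus ?thesis unfolding n_def using a0 by linarith
    next
      case False
      define g where "g = (\<lambda>x. (1 - cnj c) * wp x + of_real a * (1 + cnj c))"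
      have key: "Re (g x) = Re (wp x) + a - Re (cnj c * (wp x - of_real a))" for x
        unfolding g_def by (simp add: algebra_simps)
      have c1': "1 - cnj c \<noteq> 0"
      proof
        assume "1 - cnj c = 0"
        hence "cnj c = 1" by simp
        hence "c = 1" by (metis complex_cnj_cnj complex_cnj_one)
        thus False using False by simp
      qed
      have "0 < Re (g z)"
      proof (rule min_principle[OF _ _ _ assms(1)])
        show "g holomorphic_on UNIV" unfolding g_def by (intro holomorphic_intros)
        show "\<not> g constant_on ball 0 1" unfolding g_def by (rule wp_nonconst[OF c1'])
        fix x :: complex assume x: "cmod x = 1"
        have "Re (cnj c * (wp x - of_real a)) \<le> cmod (cnj c * (wp x - of_real a))" by (rule complex_Re_le_cmod)
        also have "\<dots> = cmod (wp x - of_real a)" using c1 by (simp add: norm_mult)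
        also have "\<dots> \<le> Re (wp x) + a" by (rule sphere_STp[OF x assms(2)])
        finally show "0 \<le> Re (g x)" unfolding key by simp
      qed
      moreover have "cnj c * (w - of_real a) = of_real n"
      proof -
        have "cnj c * (w - of_real a) = of_real n * (cnj c * c)" unfolding wc by (simp add: algebra_simps)
        thus ?thesis using cc by simp
      qed
      ultimately show ?thesis unfolding n_def using key[of z] unfolding w_def by simp
    qed
  qed
  thus ?thesis unfolding w_def .
qed

lemma sq_repr:
  assumes fA: "f \<in> classA" and qd: "quot_defined f"
  obtains F where "F holomorphic_on ball 0 1" "\<And>z. z \<in> ball 0 1 \<Longrightarrow> F z \<noteq> 0"
    "\<And>z. z \<in> ball 0 1 \<Longrightarrow> sq f z = 1 + z * deriv F z / F z"
proof -
  have hf: "f holomorphic_on ball 0 1" and f0: "f 0 = 0" and d0: "deriv f 0 = 1"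
    using fA unfolding classA_def unit_disk_def by auto
  have nz: "\<And>z. z \<in> ball 0 1 \<Longrightarrow> z \<noteq> 0 \<Longrightarrow> f z \<noteq> 0" using qd unfolding quot_defined_def unit_disk_def by auto
  define F where "F = (\<lambda>z. if z = 0 then deriv f 0 else (f z - f 0) / (z - 0))"
  have hF: "F holomorphic_on ball 0 1" unfolding F_def by (rule pole_lemma[OF hf]) simp
  have F0: "F z \<noteq> 0" if "z \<in> ball 0 1" for z
    using nz[OF that] d0 f0 unfolding F_def by auto
  have fF: "f z = z * F z" if "z \<in> ball 0 1" for z
    using f0 unfolding F_def by auto
  have df: "deriv f z = F z + z * deriv F z" if z: "z \<in> ball 0 1" for z
  proof -
    have "eventually (\<lambda>x. f x = x * F x) (nhds z)"
      using eventually_nhds_in_open[OF open_ball z] by (rule eventually_mono) (use fF in auto)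
    hence "deriv f z = deriv (\<lambda>x. x * F x) z" by (rule deriv_cong_ev) simp
    also have "\<dots> = F z + z * deriv F z"
    proof (rule DERIV_imp_deriv)
      have "(F has_field_derivative deriv F z) (at z)" by (rule holomorphic_derivI[OF hF open_ball z])
      from DERIV_mult[OF DERIV_ident this] show "((\<lambda>x. x * F x) has_field_derivative F z + z * deriv F z) (at z)"
        by (simp add: mult.commute)
    qed
    finally show ?thesis .
  qed
  show ?thesis
  proof (rule that[OF hF F0])
    fix z assume z: "z \<in> ball (0::complex) 1"
    show "sq f z = 1 + z * deriv F z / F z"
    proof (cases "z = 0")
      case True thus ?thesis by (simp add: sq_def)
    next
      case False
      have "sq f z = z * (F z + z * deriv F z) / (z * F z)" unfolding sq_def using False df[OF z] fF[OF z] by simp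
      also have "\<dots> = 1 + z * deriv F z / F z" using False F0[OF z] by (simp add: field_simps)
      finally show ?thesis .
    qed
  qed
qed

lemma sq_holo:
  assumes "f \<in> classA" "quot_defined f"
  shows "sq f holomorphic_on ball 0 1"
proof -
  obtain F where F: "F holomorphic_on ball 0 1" "\<And>z. z \<in> ball 0 1 \<Longrightarrow> F z \<noteq> 0"
    "\<And>z. z \<in> ball 0 1 \<Longrightarrow> sq f z = 1 + z * deriv F z / F z" using sq_repr[OF assms] by blast
  have "(\<lambda>z. 1 + z * deriv F z / F z) holomorphic_on ball 0 1"
    using F(1,2) by (intro holomorphic_intros) auto
  thus ?thesis by (rule holomorphic_transform) (use F(3) in auto)
qed

lemma sq_0: "sq f 0 = 1" by (simp add: sq_def)

lemma cos_pos1: fixes y :: real assumes "\<bar>y\<bar> < 1" shows "0 < cos y"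
  using assms pi_gt3 by (intro cos_gt_zero_pi) auto

lemma kmono0: fixes a b :: real assumes "0 \<le> a" "a \<le> b" "b < 1"
  shows "a * inverse ((cos a)^2) \<le> b * inverse ((cos b)^2)"
proof -
  have ca: "0 < cos a" "0 < cos b" using assms by (auto intro!: cos_pos1)
  have "cos b \<le> cos a" using assms pi_gt3 by (intro cos_monotone_0_pi_le) auto
  hence "(cos b)^2 \<le> (cos a)^2" using ca by (intro power_mono) auto
  hence "inverse ((cos a)^2) \<le> inverse ((cos b)^2)" using ca by (intro le_imp_inverse_le) auto
  thus ?thesis using assms by (intro mult_mono) auto
qed

lemma kmono: fixes a b :: real assumes "-1 < a" "a \<le> b" "b < 1"
  shows "a * inverse ((cos a)^2) \<le> b * inverse ((cos b)^2)"
proof (cases "0 \<le> a")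
  case True thus ?thesis using kmono0 assms by blast
next
  case False
  show ?thesis
  proof (cases "0 \<le> b")
    case True
    have "a * inverse ((cos a)^2) \<le> 0" using False by (simp add: mult_nonpos_nonneg)
    moreover have "0 \<le> b * inverse ((cos b)^2)" using True by simp
    ultimately show ?thesis by linarith
  next
    case False
    have "(-b) * inverse ((cos (-b))^2) \<le> (-a) * inverse ((cos (-a))^2)"
      using False \<open>\<not> 0 \<le> a\<close> assms by (intro kmono0) auto
    thus ?thesis by simp
  qed
qed

lemma phi_convex: "convex_on {-1<..<1} (\<lambda>y::real. y * tan y)"
proof (rule convex_on_realI[where f' = "\<lambda>y. tan y + y * inverse ((cos y)^2)"])
  show "connected {-1<..<(1::real)}" by simp
  fix x :: real assume x: "x \<in> {-1<..<1}"
  have "\<bar>x\<bar> < 1" using x by auto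
  hence "cos x \<noteq> 0" using cos_pos1[of x] by auto
  thus "((\<lambda>y. y * tan y) has_real_derivative tan x + x * inverse ((cos x)^2)) (at x)"
    by (auto intro!: derivative_eq_intros)
next
  fix x y :: real assume xy: "x \<in> {-1<..<1}" "y \<in> {-1<..<1}" "x \<le> y"
  have "tan x \<le> tan y"
  proof (cases "x = y")
    case False
    hence "x < y" using xy by simp
    thus ?thesis using xy pi_gt3 by (intro less_imp_le[OF tan_monotone]) auto
  qed simp
  moreover have "x * inverse ((cos x)^2) \<le> y * inverse ((cos y)^2)" using xy by (intro kmono) auto
  ultimately show "tan x + x * inverse ((cos x)^2) \<le> tan y + y * inverse ((cos y)^2)" by simp
qed

definition Vset :: "complex set" where "Vset = {z. cmod z < 1 \<and> 0 < Re ((1 + z) * exp z)}"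

lemma Vset_iff: assumes "cmod z < 1"
  shows "0 < Re ((1 + z) * exp z) \<longleftrightarrow> Im z * tan (Im z) < 1 + Re z"
proof -
  have "\<bar>Im z\<bar> < 1" using abs_Im_le_cmod[of z] assms by linarith
  hence c: "0 < cos (Im z)" by (rule cos_pos1)
  have "0 < Re ((1 + z) * exp z) \<longleftrightarrow> 0 < (1 + Re z) * cos (Im z) - Im z * sin (Im z)"
    unfolding Re_dh by (simp add: zero_less_mult_iff)
  also have "\<dots> \<longleftrightarrow> 0 < ((1 + Re z) - Im z * tan (Im z)) * cos (Im z)"
    using c by (simp add: tan_def algebra_simps)
  also have "\<dots> \<longleftrightarrow> Im z * tan (Im z) < 1 + Re z" using c by (simp add: zero_less_mult_iff)
  finally show ?thesis .
qed

lemma Vset_convex: "convex Vset"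
proof (rule convexI)
  fix x y :: complex and u v :: real
  assume x: "x \<in> Vset" and y: "y \<in> Vset" and uv: "0 \<le> u" "0 \<le> v" "u + v = 1"
  define z where "z = u *\<^sub>R x + v *\<^sub>R y"
  have nx: "cmod x < 1" and ny: "cmod y < 1" using x y unfolding Vset_def by auto
  have nz: "cmod z < 1"
  proof -
    have "cmod z \<le> u * cmod x + v * cmod y" unfolding z_def using uv
      by (metis (no_types) abs_of_nonneg norm_scaleR norm_triangle_ineq order.trans order_refl)
    also have "\<dots> < 1"
    proof (cases "u = 0")
      case True thus ?thesis using uv ny by simp
    next
      case False
      hence "u * cmod x < u * 1" using uv nx by (intro mult_strict_left_mono) auto
      moreover have "v * cmod y \<le> v * 1" using uv ny by (intro mult_left_mono) auto
      ultimately show ?thesis using uv by linarith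
    qed
    finally show ?thesis .
  qed
  have ax: "Im x * tan (Im x) < 1 + Re x" using x nx Vset_iff unfolding Vset_def by blast
  have ay: "Im y * tan (Im y) < 1 + Re y" using y ny Vset_iff unfolding Vset_def by blast
  have ix: "Im x \<in> {-1<..<1}" using abs_Im_le_cmod[of x] nx by auto
  have iy: "Im y \<in> {-1<..<1}" using abs_Im_le_cmod[of y] ny by auto
  have v: "v = 1 - u" using uv by simp
  have "Im z * tan (Im z) \<le> u * (Im x * tan (Im x)) + v * (Im y * tan (Im y))"
  proof -
    have "(\<lambda>y. y * tan y) ((1 - v) *\<^sub>R Im x + v *\<^sub>R Im y) \<le> (1 - v) * (Im x * tan (Im x)) + v * (Im y * tan (Im y))"
      by (rule convex_onD[OF phi_convex]) (use uv ix iy in auto)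
    moreover have "(1 - v) *\<^sub>R Im x + v *\<^sub>R Im y = Im z" unfolding z_def v by simp
    moreover have "1 - v = u" using uv by simp
    ultimately show ?thesis by simp
  qed
  also have "\<dots> < u * (1 + Re x) + v * (1 + Re y)"
  proof (cases "u = 0")
    case True
    hence "v = 1" using uv by simp
    thus ?thesis using ay True by simp
  next
    case False
    have "u * (Im x * tan (Im x)) < u * (1 + Re x)" using ax uv False by (intro mult_strict_left_mono) auto
    moreover have "v * (Im y * tan (Im y)) \<le> v * (1 + Re y)" using ay uv by (intro mult_left_mono) auto
    ultimately show ?thesis by linarith
  qed
  also have "\<dots> = 1 + Re z" unfolding z_def using uv(3) by (simp add: algebra_simps)
  finally have "Im z * tan (Im z) < 1 + Re z" .
  thus "u *\<^sub>R x + v *\<^sub>R y \<in> Vset" using Vset_iff[OF nz] nz unfolding Vset_def z_def by auto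
qed

lemma Vset_open: "open Vset"
proof -
  have eq: "Vset = ball 0 1 \<inter> {z. 0 < Re ((1 + z) * exp z)}" unfolding Vset_def by auto
  have o: "open {z. 0 < Re ((1 + z) * exp z)}"
    by (intro open_Collect_less continuous_intros)
  show ?thesis unfolding eq by (intro open_Int open_ball o)
qed

lemma Vset_sub: "Vset \<subseteq> ball 0 1" unfolding Vset_def by auto

lemma Vset_0: "0 \<in> Vset" unfolding Vset_def by simp

lemma wp_inj: "inj_on wp Vset"
proof (rule inj_onI, rule ccontr)
  fix z1 z2 assume z1: "z1 \<in> Vset" and z2: "z2 \<in> Vset" and eq: "wp z1 = wp z2" and ne: "z1 \<noteq> z2"
  define d where "d = z2 - z1"
  have d: "d \<noteq> 0" using ne unfolding d_def by simp
  define G where "G = (\<lambda>t::real. Re (wp (z1 + of_real t * d) * inverse d))"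
  have der: "((\<lambda>w. wp (z1 + w * d) * inverse d) has_field_derivative ((1 + (z1 + w * d)) * exp (z1 + w * d))) (at w)" for w
  proof -
    have "((\<lambda>w. wp (z1 + w * d) * inverse d) has_field_derivative ((1 + (z1 + w * d)) * exp (z1 + w * d)) * (d * inverse d)) (at w)"
      unfolding wp_eq
      apply (rule derivative_eq_intros refl)+
      by (simp add: algebra_simps)
    moreover have "d * inverse d = 1" using d by simp
    ultimately show ?thesis by simp
  qed
  have "G 0 < G 1"
  proof (rule DERIV_pos_imp_increasing[of 0 1 G])
    fix t :: real assume t: "0 \<le> t" "t \<le> 1"
    have zt: "z1 + of_real t * d = (1 - t) *\<^sub>R z1 + t *\<^sub>R z2" unfolding d_def by (simp add: scaleR_conv_of_real algebra_simps)
    have "z1 + of_real t * d \<in> Vset" unfolding zt using Vset_convex z1 z2 t by (intro convexD_alt) auto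
    hence pos: "0 < Re ((1 + (z1 + of_real t * d)) * exp (z1 + of_real t * d))" unfolding Vset_def by auto
    have "((\<lambda>t. wp (z1 + of_real t * d) * inverse d) has_vector_derivative ((1 + (z1 + of_real t * d)) * exp (z1 + of_real t * d))) (at t)"
      by (rule has_vector_derivative_real_field[OF der])
    hence "(G has_field_derivative Re ((1 + (z1 + of_real t * d)) * exp (z1 + of_real t * d))) (at t)"
      unfolding G_def by (rule has_field_derivative_Re)
    thus "\<exists>y. (G has_field_derivative y) (at t) \<and> 0 < y" using pos by blast
  qed simp
  moreover have "G 0 = G 1" unfolding G_def d_def using eq by simp
  ultimately show False by simp
qed

lemma cover:
  assumes w: "(exp 1 - 1) * cmod (w - 1) < Re w"
  shows "w \<in> wp ` Vset"
proof -
  define q where "q = (\<lambda>t::real. 1 + of_real t * (w - 1))"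
  have cq: "continuous_on {0..1} q" unfolding q_def by (intro continuous_intros)
  have e: "0 < exp 1 - (1::real)" using e_bounds by simp
  have qH: "(exp 1 - 1) * cmod (q t - 1) < Re (q t)" if t: "t \<in> {0..1}" for t
  proof (cases "t = 0")
    case True thus ?thesis unfolding q_def by simp
  next
    case False
    hence t0: "0 < t" using t by simp
    have "(exp 1 - 1) * cmod (q t - 1) = t * ((exp 1 - 1) * cmod (w - 1))"
      unfolding q_def using t0 by (simp add: norm_mult)
    also have "\<dots> < t * Re w" using w t0 by simp
    also have "\<dots> \<le> Re (q t)" unfolding q_def using t by (simp add: algebra_simps)
    finally show ?thesis .
  qed
  define K where "K = {z. cmod z \<le> 1 \<and> 0 \<le> Re ((1 + z) * exp z)}"
  have clK: "closure Vset \<subseteq> K"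
  proof (rule closure_minimal)
    show "Vset \<subseteq> K" unfolding Vset_def K_def by auto
    show "closed K" unfolding K_def by (intro closed_Collect_conj closed_Collect_le continuous_intros)
  qed
  have bnd: "\<not> (exp 1 - 1) * cmod (wp z - 1) < Re (wp z)" if z: "z \<in> closure Vset" "z \<notin> Vset" for z
  proof -
    have zK: "cmod z \<le> 1" "0 \<le> Re ((1 + z) * exp z)" using clK z(1) unfolding K_def by auto
    show ?thesis
    proof (cases "cmod z = 1")
      case True thus ?thesis using C1[OF True] by simp
    next
      case False
      hence "cmod z < 1" using zK by simp
      hence "\<not> 0 < Re ((1 + z) * exp z)" using z(2) unfolding Vset_def by auto
      hence "Re ((1 + z) * exp z) = 0" using zK by simp
      thus ?thesis using C2[OF zK(1)] by simp
    qed
  qed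
  have opn: "open (wp ` Vset)" by (rule open_mapping_thm3[OF wp_holo Vset_open wp_inj])
  have cpt: "compact (wp ` closure Vset)"
  proof (rule compact_continuous_image[OF wp_cont])
    show "compact (closure Vset)"
      using bounded_subset[OF bounded_ball Vset_sub] by (simp add: compact_closure)
  qed
  define T where "T = {0..1} \<inter> q -` (wp ` Vset)"
  have TT: "T = {0..1} \<inter> q -` (wp ` closure Vset)"
  proof
    show "T \<subseteq> {0..1} \<inter> q -` (wp ` closure Vset)" unfolding T_def using closure_subset by blast
    show "{0..1} \<inter> q -` (wp ` closure Vset) \<subseteq> T"
    proof
      fix t assume t: "t \<in> {0..1} \<inter> q -` (wp ` closure Vset)"
      then obtain z where z: "z \<in> closure Vset" "q t = wp z" by auto
      have "z \<in> Vset"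
      proof (rule ccontr)
        assume "z \<notin> Vset"
        from bnd[OF z(1) this] qH[of t] t z(2) show False by auto
      qed
      thus "t \<in> T" unfolding T_def using t z by auto
    qed
  qed
  have o1: "openin (top_of_set {0..1}) T" unfolding T_def by (rule continuous_openin_preimage_gen[OF cq opn])
  have c1: "closedin (top_of_set {0..1}) T" unfolding TT by (rule continuous_closedin_preimage[OF cq compact_imp_closed[OF cpt]])
  have "T = {} \<or> T = {0..1}" using connected_clopen[of "{0..1::real}"] o1 c1 by auto
  moreover have "0 \<in> T" unfolding T_def q_def using Vset_0 by (auto simp: wp_def intro!: image_eqI[of _ _ 0])
  ultimately have "1 \<in> T" by auto
  thus ?thesis unfolding T_def q_def by simp
qed

lemma Swp_prop:
  assumes f: "f \<in> S_wp" and Q: "\<And>u. u \<in> ball 0 1 \<Longrightarrow> Q (wp u)" and z: "z \<in> unit_disk"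
  shows "Q (sq f z)"
proof -
  obtain w where w: "w ` unit_disk \<subseteq> unit_disk" "\<And>z. z \<in> unit_disk \<Longrightarrow> sq f z = wp (w z)"
    using f unfolding S_wp_def subordinate_def by blast
  have "w z \<in> ball 0 1" using w(1) z unfolding unit_disk_def by blast
  thus ?thesis using Q w(2)[OF z] by simp
qed

lemma Swp_A: "f \<in> S_wp \<Longrightarrow> f \<in> classA \<and> quot_defined f" unfolding S_wp_def by auto

lemma part1: "0 \<le> \<alpha> \<Longrightarrow> \<alpha> \<le> omega0 \<Longrightarrow> S_wp \<subseteq> starlike_order \<alpha>"
proof
  fix f assume a: "0 \<le> \<alpha>" "\<alpha> \<le> omega0" and f: "f \<in> S_wp"
  have "\<forall>z\<in>unit_disk. \<alpha> < Re (sq f z)"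
  proof
    fix z assume z: "z \<in> unit_disk"
    show "\<alpha> < Re (sq f z)" by (rule Swp_prop[OF f _ z]) (use wp_gt_omega0 a in force)
  qed
  thus "f \<in> starlike_order \<alpha>" using Swp_A[OF f] unfolding starlike_order_def by auto
qed

lemma part1b: "0 \<le> \<alpha> \<Longrightarrow> starlike_order \<alpha> \<subseteq> starlike"
  unfolding starlike_def starlike_order_def by force

lemma part2: "1 + exp 1 \<le> \<beta> \<Longrightarrow> S_wp \<subseteq> classM \<beta>"
proof
  fix f assume b: "1 + exp 1 \<le> \<beta>" and f: "f \<in> S_wp"
  have "\<forall>z\<in>unit_disk. Re (sq f z) < \<beta>"
  proof
    fix z assume z: "z \<in> unit_disk"
    show "Re (sq f z) < \<beta>" by (rule Swp_prop[OF f _ z]) (use wp_lt b in force)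
  qed
  thus "f \<in> classM \<beta>" using Swp_A[OF f] unfolding classM_def by auto
qed

lemma part3: "S_wp \<subseteq> starlike_order omega0"
proof
  fix f assume f: "f \<in> S_wp"
  have "\<forall>z\<in>unit_disk. omega0 < Re (sq f z)"
  proof
    fix z assume z: "z \<in> unit_disk"
    show "omega0 < Re (sq f z)" by (rule Swp_prop[OF f _ z]) (use wp_gt_omega0 in force)
  qed
  thus "f \<in> starlike_order omega0" using Swp_A[OF f] unfolding starlike_order_def by auto
qed

lemma part4a: "gamma0 \<le> \<gamma> \<Longrightarrow> S_wp \<subseteq> strongly_starlike \<gamma>"
proof
  fix f assume g: "gamma0 \<le> \<gamma>" and f: "f \<in> S_wp"
  have G: "gamma0 * pi / 2 = (SUP z\<in>ball 0 1. \<bar>Arg (wp z)\<bar>)" unfolding gamma0_def unit_disk_def by simp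
  have le: "gamma0 * pi / 2 \<le> \<gamma> * pi / 2" using g pi_gt_zero by (simp add: divide_right_mono)
  have "\<forall>z\<in>unit_disk. \<bar>Arg (sq f z)\<bar> < \<gamma> * pi / 2"
  proof
    fix z assume z: "z \<in> unit_disk"
    show "\<bar>Arg (sq f z)\<bar> < \<gamma> * pi / 2"
    proof (rule Swp_prop[OF f _ z])
      fix u :: complex assume u: "u \<in> ball 0 1"
      show "\<bar>Arg (wp u)\<bar> < \<gamma> * pi / 2" using arg_strict[OF u] G le by linarith
    qed
  qed
  thus "f \<in> strongly_starlike \<gamma>" using Swp_A[OF f] unfolding strongly_starlike_def by auto
qed

lemma part4b: "\<gamma> \<le> 1 \<Longrightarrow> strongly_starlike \<gamma> \<subseteq> starlike"
proof
  fix f assume g: "\<gamma> \<le> 1" and f: "f \<in> strongly_starlike \<gamma>"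
  have fA: "f \<in> classA" and qd: "quot_defined f" and
    ar: "\<And>z. z \<in> ball 0 1 \<Longrightarrow> \<bar>Arg (sq f z)\<bar> < \<gamma> * pi / 2"
    using f unfolding strongly_starlike_def unit_disk_def by auto
  have ar2: "\<bar>Arg (sq f z)\<bar> < pi / 2" if "z \<in> ball 0 1" for z
  proof -
    have "\<gamma> * pi / 2 \<le> 1 * pi / 2" using g pi_gt_zero by (intro divide_right_mono mult_right_mono) auto
    hence "\<gamma> * pi / 2 \<le> pi / 2" by simp
    thus ?thesis using ar[OF that] by linarith
  qed
  have hol: "sq f holomorphic_on ball 0 1" by (rule sq_holo[OF fA qd])
  have nz: "sq f z \<noteq> 0" if z: "z \<in> ball 0 1" for z
  proof
    assume p0: "sq f z = 0"
    have nc: "\<not> sq f constant_on ball 0 1"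
    proof
      assume "sq f constant_on ball 0 1"
      then obtain c where "\<And>x. x \<in> ball 0 1 \<Longrightarrow> sq f x = c" unfolding constant_on_def by blast
      hence "sq f 0 = sq f z" using z by simp
      thus False using p0 sq_0[of f] by simp
    qed
    have opn: "open (sq f ` ball 0 1)"
      by (rule open_mapping_thm[OF hol _ _ _ _ nc]) auto
    have "0 \<in> sq f ` ball 0 1" using z p0 by (metis imageI)
    then obtain r where r: "r > 0" "ball 0 r \<subseteq> sq f ` ball 0 1" using openE[OF opn] by blast
    have "- of_real (r/2) \<in> ball (0::complex) r" using r by simp
    hence "- of_real (r/2) \<in> sq f ` ball 0 1" using r by blast
    then obtain x where x: "x \<in> ball 0 1" "- of_real (r/2) = sq f x" by (rule imageE)
    have "Arg (sq f x) = pi" unfolding x(2)[symmetric] using r Arg_eq_pi by simp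
    thus False using ar2[OF x(1)] pi_gt_zero by simp
  qed
  have "\<forall>z\<in>unit_disk. 0 < Re (sq f z)"
  proof
    fix z assume "z \<in> unit_disk"
    hence z: "z \<in> ball 0 1" unfolding unit_disk_def .
    show "0 < Re (sq f z)" using ar2[OF z] nz[OF z] Arg_Re_pos by blast
  qed
  thus "f \<in> starlike" using fA qd unfolding starlike_def starlike_order_def by auto
qed

lemma part5: "b_const \<le> a \<Longrightarrow> S_wp \<subseteq> ST_p a"
proof
  fix f assume a: "b_const \<le> a" and f: "f \<in> S_wp"
  have "\<forall>z\<in>unit_disk. Re (sq f z) + a > cmod (sq f z - of_real a)"
  proof
    fix z assume z: "z \<in> unit_disk"
    show "Re (sq f z) + a > cmod (sq f z - of_real a)" by (rule Swp_prop[OF f _ z]) (use STp_ball a in force)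
  qed
  thus "f \<in> ST_p a" using Swp_A[OF f] unfolding ST_p_def by auto
qed

lemma part6: "exp 1 - 1 \<le> k \<Longrightarrow> k_ST k \<subseteq> S_wp"
proof
  fix f assume k: "exp 1 - 1 \<le> k" and f: "f \<in> k_ST k"
  have fA: "f \<in> classA" and qd: "quot_defined f" and
    kc: "\<And>z. z \<in> ball 0 1 \<Longrightarrow> k * cmod (sq f z - 1) < Re (sq f z)"
    using f unfolding k_ST_def unit_disk_def by auto
  have hol: "sq f holomorphic_on ball 0 1" by (rule sq_holo[OF fA qd])
  obtain g where g: "g holomorphic_on (wp ` Vset)" "\<And>z. z \<in> Vset \<Longrightarrow> g (wp z) = z"
    using holomorphic_has_inverse[OF wp_holo Vset_open wp_inj] by metis
  have cov: "sq f z \<in> wp ` Vset" if z: "z \<in> ball 0 1" for z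
  proof (rule cover)
    have "(exp 1 - 1) * cmod (sq f z - 1) \<le> k * cmod (sq f z - 1)" using k by (intro mult_right_mono) auto
    thus "(exp 1 - 1) * cmod (sq f z - 1) < Re (sq f z)" using kc[OF z] by linarith
  qed
  define w where "w = g \<circ> sq f"
  have w1: "w z \<in> Vset \<and> sq f z = wp (w z)" if z: "z \<in> ball 0 1" for z
  proof -
    obtain u where u: "u \<in> Vset" "sq f z = wp u" using cov[OF z] by blast
    thus ?thesis unfolding w_def using g(2)[OF u(1)] by simp
  qed
  have "subordinate (sq f) wp"
    unfolding subordinate_def
  proof (intro exI conjI ballI)
    show "w holomorphic_on unit_disk" unfolding w_def unit_disk_def
      by (rule holomorphic_on_compose_gen[OF hol g(1)]) (use cov in blast)
    show "w ` unit_disk \<subseteq> unit_disk" unfolding unit_disk_def using w1 Vset_sub by blast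
    show "w 0 = 0" unfolding w_def using g(2)[OF Vset_0] by (simp add: sq_0 wp_def)
    fix z assume "z \<in> unit_disk"
    thus "sq f z = wp (w z)" using w1 unfolding unit_disk_def by blast
  qed
  thus "f \<in> S_wp" unfolding S_wp_def using fA qd by auto
qed

theorem mainTheorem3:
  shows "(\<forall>\<alpha>. 0 \<le> \<alpha> \<and> \<alpha> \<le> omega0 \<longrightarrow>
            S_wp \<subseteq> starlike_order \<alpha> \<and> starlike_order \<alpha> \<subseteq> starlike)
       \<and> (\<forall>\<beta>. \<beta> \<ge> 1 + exp 1 \<longrightarrow> S_wp \<subseteq> classM \<beta>)
       \<and> S_wp \<subseteq> starlike_order omega0 \<inter> classM (1 + exp 1)
       \<and> (\<forall>\<gamma>. gamma0 \<le> \<gamma> \<and> \<gamma> \<le> 1 \<longrightarrow>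
            S_wp \<subseteq> strongly_starlike \<gamma> \<and> strongly_starlike \<gamma> \<subseteq> starlike)
       \<and> (\<forall>a. a \<ge> b_const \<longrightarrow> S_wp \<subseteq> ST_p a)
       \<and> (\<forall>k. k \<ge> exp 1 - 1 \<longrightarrow> k_ST k \<subseteq> S_wp)"
  using part1 part1b part2 part3 part4a part4b part5 part6 by auto

end
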